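(* Let $X=(X^{(1)},\dots,X^{(p)})\in\mathbb{R}^p$ be a random vector with finite second moments and strictly positive definite covariance matrix $\Sigma_X$, let $\epsilon$ be a random variable with $E(\epsilon)=0$, $\mathrm{var}(\epsilon)=\sigma^2>0$, uncorrelated with $X^{(1)},\dots,X^{(p)}$, and let $Y=\delta+\sum_{j=1}^p\beta_jX^{(j)}+\epsilon$ with $\delta\in\mathbb{R}$, $\beta\in\mathbb{R}^p$. Suppose the distribution of $(X,Y)$ is partially faithful. Then for every $j\in\{1,\dots,p\}$: $\rho(Y,X^{(j)}\mid X^{(\mathcal{S})})\neq 0$ for all $\mathcal{S}\subseteq\{j\}^C$ if and only if $\beta_j\neq 0$.
   Context: $\rho(Z^{(1)},Z^{(2)}\mid W)$ denotes the population partial correlation of $Z^{(1)},Z^{(2)}$ given the collection $W$. For $\mathcal{S}\subseteq\{1,\dots,p\}$, $X^{(\mathcal{S})}=\{X^{(j)};j\in\mathcal{S}\}$ and $\{j\}^C=\{1,\dots,p\}\setminus\{j\}$. The distribution of $(X,Y)$ is partially faithful if for every $j$: if $\rho(Y,X^{(j)}\mid X^{(\mathcal{S})})=0$ for some $\mathcal{S}\subseteq\{j\}^C$, then $\rho(Y,X^{(j)}\mid X^{(\{j\}^C)})=0$. *)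

theory Defs
  imports "HOL-Probability.Probability"
begin

definition cov :: "'a measure \<Rightarrow> ('a \<Rightarrow> real) \<Rightarrow> ('a \<Rightarrow> real) \<Rightarrow> real" where
  "cov M U V = (\<integral>\<omega>. (U \<omega> - (\<integral>x. U x \<partial>M)) * (V \<omega> - (\<integral>x. V x \<partial>M)) \<partial>M)"

text \<open>Coefficients of the best linear (affine) predictor of Z from the variables
  W k, k in S: characterised by the normal equations (the residual has mean zero
  and is orthogonal to every W k, k in S).\<close>
definition lin_coeffs :: "'a measure \<Rightarrow> ('a \<Rightarrow> real) \<Rightarrow> (nat \<Rightarrow> 'a \<Rightarrow> real) \<Rightarrow> nat set
      \<Rightarrow> real \<times> (nat \<Rightarrow> real)" where
  "lin_coeffs M Z W S = (SOME (c0, c).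
      (\<integral>\<omega>. Z \<omega> - (c0 + (\<Sum>k\<in>S. c k * W k \<omega>)) \<partial>M) = 0 \<and>
      (\<forall>k\<in>S. (\<integral>\<omega>. (Z \<omega> - (c0 + (\<Sum>k'\<in>S. c k' * W k' \<omega>))) * W k \<omega> \<partial>M) = 0))"

definition resid :: "'a measure \<Rightarrow> ('a \<Rightarrow> real) \<Rightarrow> (nat \<Rightarrow> 'a \<Rightarrow> real) \<Rightarrow> nat set \<Rightarrow> 'a \<Rightarrow> real" where
  "resid M Z W S = (\<lambda>\<omega>. Z \<omega> - (fst (lin_coeffs M Z W S)
                         + (\<Sum>k\<in>S. snd (lin_coeffs M Z W S) k * W k \<omega>)))"

definition pcorr :: "'a measure \<Rightarrow> ('a \<Rightarrow> real) \<Rightarrow> ('a \<Rightarrow> real) \<Rightarrow> (nat \<Rightarrow> 'a \<Rightarrow> real) \<Rightarrow> nat set \<Rightarrow> real" where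
  "pcorr M Z1 Z2 W S =
     cov M (resid M Z1 W S) (resid M Z2 W S)
       / sqrt (cov M (resid M Z1 W S) (resid M Z1 W S) * cov M (resid M Z2 W S) (resid M Z2 W S))"

definition partially_faithful :: "'a measure \<Rightarrow> nat \<Rightarrow> (nat \<Rightarrow> 'a \<Rightarrow> real) \<Rightarrow> ('a \<Rightarrow> real) \<Rightarrow> bool" where
  "partially_faithful M p X Y =
     (\<forall>j\<in>{1..p}. (\<exists>S. S \<subseteq> {1..p} - {j} \<and> pcorr M Y (X j) X S = 0)
                 \<longrightarrow> pcorr M Y (X j) X ({1..p} - {j}) = 0)"

end

theory Submission
  imports Defs
begin


definition L2 :: "'a measure \<Rightarrow> ('a \<Rightarrow> real) \<Rightarrow> bool" where
  "L2 N f \<longleftrightarrow> f \<in> borel_measurable N \<and> integrable N (\<lambda>x. (f x)^2)"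

definition lc :: "(nat \<Rightarrow> 'a \<Rightarrow> real) \<Rightarrow> nat set \<Rightarrow> ('a \<Rightarrow> real) set" where
  "lc W S = {f. \<exists>c0 c. f = (\<lambda>\<omega>. c0 + (\<Sum>k\<in>S. c k * W k \<omega>))}"

definition orth :: "'a measure \<Rightarrow> (nat \<Rightarrow> 'a \<Rightarrow> real) \<Rightarrow> nat set \<Rightarrow> ('a \<Rightarrow> real) \<Rightarrow> bool" where
  "orth N W S f \<longleftrightarrow> (\<forall>v\<in>lc W S. (\<integral>\<omega>. f \<omega> * v \<omega> \<partial>N) = 0)"

lemma lc_const: "(\<lambda>_. c) \<in> lc W S"
  unfolding lc_def by (rule CollectI, rule exI[of _ c], rule exI[of _ "\<lambda>_. 0"]) simp

lemma lc_add: "u \<in> lc W S \<Longrightarrow> v \<in> lc W S \<Longrightarrow> (\<lambda>x. u x + v x) \<in> lc W S"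
proof -
  assume "u \<in> lc W S" "v \<in> lc W S"
  then obtain a0 a b0 b where u: "u = (\<lambda>\<omega>. a0 + (\<Sum>k\<in>S. a k * W k \<omega>))"
    and v: "v = (\<lambda>\<omega>. b0 + (\<Sum>k\<in>S. b k * W k \<omega>))" unfolding lc_def by blast
  have "(\<lambda>x. u x + v x) = (\<lambda>\<omega>. (a0+b0) + (\<Sum>k\<in>S. (a k + b k) * W k \<omega>))"
    unfolding u v by (auto simp: algebra_simps sum.distrib)
  then show ?thesis unfolding lc_def by (intro CollectI exI[of _ "a0+b0"] exI[of _ "\<lambda>k. a k + b k"])
qed

lemma lc_scale: "u \<in> lc W S \<Longrightarrow> (\<lambda>x. t * u x) \<in> lc W S"
proof -
  assume "u \<in> lc W S"
  then obtain a0 a where u: "u = (\<lambda>\<omega>. a0 + (\<Sum>k\<in>S. a k * W k \<omega>))" unfolding lc_def by blast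
  have "(\<lambda>x. t * u x) = (\<lambda>\<omega>. (t*a0) + (\<Sum>k\<in>S. (t * a k) * W k \<omega>))"
    unfolding u by (auto simp: algebra_simps sum_distrib_left)
  then show ?thesis unfolding lc_def by (intro CollectI exI[of _ "t*a0"] exI[of _ "\<lambda>k. t * a k"])
qed

lemma lc_diff: "u \<in> lc W S \<Longrightarrow> v \<in> lc W S \<Longrightarrow> (\<lambda>x. u x - v x) \<in> lc W S"
  using lc_add[of u W S "\<lambda>x. (-1) * v x"] lc_scale[of v W S "-1"] by simp

lemma lc_W: "finite S \<Longrightarrow> k \<in> S \<Longrightarrow> W k \<in> lc W S"
proof -
  assume "finite S" "k \<in> S"
  have "W k = (\<lambda>\<omega>. 0 + (\<Sum>k'\<in>S. (if k' = k then 1 else 0) * W k' \<omega>))"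
  proof
    fix \<omega>
    have "(\<Sum>k'\<in>S. (if k' = k then 1 else 0) * W k' \<omega>) = (\<Sum>k'\<in>S. if k' = k then W k' \<omega> else 0)"
      by (rule sum.cong) auto
    also have "\<dots> = W k \<omega>" using \<open>finite S\<close> \<open>k \<in> S\<close> by (simp add: sum.delta)
    finally show "W k \<omega> = 0 + (\<Sum>k'\<in>S. (if k' = k then 1 else 0) * W k' \<omega>)" by simp
  qed
  then show ?thesis unfolding lc_def by (intro CollectI exI[of _ "0"] exI[of _ "\<lambda>k'. if k' = k then 1 else 0"])
qed

lemma lc_mono: "finite T \<Longrightarrow> S \<subseteq> T \<Longrightarrow> lc W S \<subseteq> lc W T"
proof
  fix u assume T: "finite T" "S \<subseteq> T" and "u \<in> lc W S"
  then obtain a0 a where u: "u = (\<lambda>\<omega>. a0 + (\<Sum>k\<in>S. a k * W k \<omega>))" unfolding lc_def by blast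
  have "u = (\<lambda>\<omega>. a0 + (\<Sum>k\<in>T. (if k \<in> S then a k else 0) * W k \<omega>))"
  proof
    fix \<omega>
    have "(\<Sum>k\<in>T. (if k \<in> S then a k else 0) * W k \<omega>) = (\<Sum>k\<in>T. if k \<in> S then a k * W k \<omega> else 0)"
      by (rule sum.cong) auto
    also have "\<dots> = (\<Sum>k\<in>S. a k * W k \<omega>)"
      using T by (simp add: sum.If_cases Int_absorb1)
    finally show "u \<omega> = a0 + (\<Sum>k\<in>T. (if k \<in> S then a k else 0) * W k \<omega>)" unfolding u by simp
  qed
  then show "u \<in> lc W T" unfolding lc_def by (intro CollectI exI[of _ "a0"] exI[of _ "\<lambda>k. if k \<in> S then a k else 0"])
qed

lemma lc_insert: "finite S \<Longrightarrow> k \<notin> S \<Longrightarrow> v \<in> lc W (insert k S) \<Longrightarrow>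
   \<exists>u\<in>lc W S. \<exists>a. v = (\<lambda>\<omega>. u \<omega> + a * W k \<omega>)"
proof -
  assume "finite S" "k \<notin> S" "v \<in> lc W (insert k S)"
  then obtain a0 a where v: "v = (\<lambda>\<omega>. a0 + (\<Sum>k\<in>insert k S. a k * W k \<omega>))" unfolding lc_def by blast
  have "v = (\<lambda>\<omega>. (a0 + (\<Sum>k\<in>S. a k * W k \<omega>)) + a k * W k \<omega>)"
    unfolding v using \<open>finite S\<close> \<open>k \<notin> S\<close> by auto
  moreover have "(\<lambda>\<omega>. a0 + (\<Sum>k\<in>S. a k * W k \<omega>)) \<in> lc W S" unfolding lc_def by blast
  ultimately show ?thesis by (intro bexI[of _ "\<lambda>\<omega>. a0 + (\<Sum>k\<in>S. a k * W k \<omega>)"] exI[of _ "a k"])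
qed

context prob_space begin

lemma L2_mult_int: "L2 M f \<Longrightarrow> L2 M g \<Longrightarrow> integrable M (\<lambda>x. f x * g x)"
proof -
  assume f: "L2 M f" and g: "L2 M g"
  have "integrable M (\<lambda>x. (f x)^2 + (g x)^2)" using f g unfolding L2_def by auto
  then show ?thesis
  proof (rule Bochner_Integration.integrable_bound)
    show "(\<lambda>x. f x * g x) \<in> borel_measurable M" using f g unfolding L2_def by (intro borel_measurable_times) auto
    show "AE x in M. norm (f x * g x) \<le> norm ((f x)^2 + (g x)^2)"
    proof (rule AE_I2)
      fix x
      have "0 \<le> (\<bar>f x\<bar> - \<bar>g x\<bar>)^2" by simp
      then have h: "2*(\<bar>f x\<bar>*\<bar>g x\<bar>) \<le> \<bar>f x\<bar>^2 + \<bar>g x\<bar>^2"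
        by (simp add: power2_diff algebra_simps)
      have h2: "0 \<le> \<bar>f x\<bar>*\<bar>g x\<bar>" by simp
      have "\<bar>f x * g x\<bar> \<le> (f x)^2 + (g x)^2"
        unfolding abs_mult using h h2 by (simp only: power2_abs)
      then show "norm (f x * g x) \<le> norm ((f x)^2 + (g x)^2)" by simp
    qed
  qed
qed

lemma L2_const: "L2 M (\<lambda>_. c)" unfolding L2_def by simp

lemma L2_integrable: "L2 M f \<Longrightarrow> integrable M f"
  using L2_mult_int[of f "\<lambda>_. 1"] L2_const by simp

lemma L2_add: "L2 M f \<Longrightarrow> L2 M g \<Longrightarrow> L2 M (\<lambda>x. f x + g x)"
proof -
  assume f: "L2 M f" and g: "L2 M g"
  have "integrable M (\<lambda>x. (f x)^2 + 2 * (f x * g x) + (g x)^2)"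
    using f g L2_mult_int[OF f g] unfolding L2_def by auto
  moreover have "(\<lambda>x. (f x + g x)^2) = (\<lambda>x. (f x)^2 + 2 * (f x * g x) + (g x)^2)"
    by (auto simp: power2_sum)
  moreover have "(\<lambda>x. f x + g x) \<in> borel_measurable M" using f g unfolding L2_def by (intro borel_measurable_add) auto
  ultimately show ?thesis unfolding L2_def by simp
qed

lemma L2_scale: "L2 M f \<Longrightarrow> L2 M (\<lambda>x. t * f x)"
proof -
  assume f: "L2 M f"
  have "(\<lambda>x. t * f x) \<in> borel_measurable M" using f unfolding L2_def by (intro borel_measurable_times) auto
  then show ?thesis using f unfolding L2_def by (simp add: power_mult_distrib)
qed

lemma L2_diff: "L2 M f \<Longrightarrow> L2 M g \<Longrightarrow> L2 M (\<lambda>x. f x - g x)"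
  using L2_add[of f "\<lambda>x. (-1) * g x"] L2_scale[of g "-1"] by simp

lemma L2_sum: "(\<And>i. i \<in> I \<Longrightarrow> L2 M (f i)) \<Longrightarrow> L2 M (\<lambda>x. \<Sum>i\<in>I. f i x)"
proof (induction I rule: infinite_finite_induct)
  case (infinite A) then show ?case using L2_const by simp
next
  case empty then show ?case using L2_const by simp
next
  case (insert a A) then show ?case using L2_add[of "f a" "\<lambda>x. \<Sum>i\<in>A. f i x"] by simp
qed

lemma lc_L2: "(\<And>k. k\<in>S \<Longrightarrow> L2 M (W k)) \<Longrightarrow> v \<in> lc W S \<Longrightarrow> L2 M v"
proof -
  assume W: "\<And>k. k\<in>S \<Longrightarrow> L2 M (W k)" and "v \<in> lc W S"
  then obtain a0 a where v: "v = (\<lambda>\<omega>. a0 + (\<Sum>k\<in>S. a k * W k \<omega>))" unfolding lc_def by blast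
  have "L2 M (\<lambda>\<omega>. \<Sum>k\<in>S. a k * W k \<omega>)" by (rule L2_sum, rule L2_scale, rule W)
  then show ?thesis unfolding v by (rule L2_add[OF L2_const])
qed

end


context prob_space begin

lemma int_const: "(\<integral>x. c \<partial>M) = (c::real)" by (simp add: prob_space)

lemma orth_normal:
  assumes W: "\<And>k. k\<in>S \<Longrightarrow> L2 M (W k)" and f: "L2 M f" and m: "(\<integral>x. f x \<partial>M) = 0"
    and o: "\<forall>k\<in>S. (\<integral>x. f x * W k x \<partial>M) = 0"
  shows "orth M W S f"
  unfolding orth_def
proof
  fix v assume "v \<in> lc W S"
  then obtain c0 c where v: "v = (\<lambda>\<omega>. c0 + (\<Sum>k\<in>S. c k * W k \<omega>))" unfolding lc_def by blast
  have eq: "(\<lambda>x. f x * v x) = (\<lambda>x. c0 * f x + (\<Sum>k\<in>S. c k * (f x * W k x)))"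
    unfolding v by (auto simp: algebra_simps sum_distrib_left)
  have i1: "integrable M (\<lambda>x. c0 * f x)" using L2_integrable[OF f] by simp
  have i2: "\<And>k. k \<in> S \<Longrightarrow> integrable M (\<lambda>x. c k * (f x * W k x))"
    using L2_mult_int[OF f W] by simp
  have i3: "integrable M (\<lambda>x. \<Sum>k\<in>S. c k * (f x * W k x))"
    using i2 by (rule Bochner_Integration.integrable_sum)
  have "(\<integral>x. f x * v x \<partial>M) = c0 * (\<integral>x. f x \<partial>M) + (\<Sum>k\<in>S. c k * (\<integral>x. f x * W k x \<partial>M))"
    unfolding eq by (simp add: Bochner_Integration.integral_add[OF i1 i3] Bochner_Integration.integral_sum[OF i2])
  then show "(\<integral>x. f x * v x \<partial>M) = 0" using m o by simp
qed

lemma orth_imp: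
  assumes "finite S" "orth M W S f"
  shows "(\<integral>x. f x \<partial>M) = 0" "\<forall>k\<in>S. (\<integral>x. f x * W k x \<partial>M) = 0"
  using assms lc_const[of 1 W S] lc_W[of S] unfolding orth_def by auto

lemma orth_add:
  assumes W: "\<And>k. k\<in>S \<Longrightarrow> L2 M (W k)" and f: "L2 M f" and g: "L2 M g"
    and of: "orth M W S f" and og: "orth M W S g"
  shows "orth M W S (\<lambda>x. f x + g x)"
  unfolding orth_def
proof
  fix v assume v: "v \<in> lc W S"
  have vL: "L2 M v" using lc_L2[OF W v] .
  have "(\<integral>x. (f x + g x) * v x \<partial>M) = (\<integral>x. f x * v x + g x * v x \<partial>M)"
    by (simp add: algebra_simps)
  also have "\<dots> = (\<integral>x. f x * v x \<partial>M) + (\<integral>x. g x * v x \<partial>M)"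
    by (rule Bochner_Integration.integral_add[OF L2_mult_int[OF f vL] L2_mult_int[OF g vL]])
  finally show "(\<integral>x. (f x + g x) * v x \<partial>M) = 0" using of og v unfolding orth_def by simp
qed

lemma orth_scale:
  assumes "orth M W S f"
  shows "orth M W S (\<lambda>x. t * f x)"
  using assms unfolding orth_def by (simp add: mult.assoc)

lemma orth_diff:
  assumes W: "\<And>k. k\<in>S \<Longrightarrow> L2 M (W k)" and f: "L2 M f" and g: "L2 M g"
    and of: "orth M W S f" and og: "orth M W S g"
  shows "orth M W S (\<lambda>x. f x - g x)"
  using orth_add[OF W f L2_scale[OF g, of "-1"] of orth_scale[OF og, of "-1"]] by simp

lemma orth_mono: "finite T \<Longrightarrow> S \<subseteq> T \<Longrightarrow> orth M W T f \<Longrightarrow> orth M W S f"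
  using lc_mono[of T S W] unfolding orth_def by blast

lemma AE_zero_of_sq:
  assumes a: "L2 M a" and z: "(\<integral>x. a x * a x \<partial>M) = 0"
  shows "AE x in M. a x = 0"
proof -
  have "AE x in M. a x * a x = 0"
    using integral_nonneg_eq_0_iff_AE[OF L2_mult_int[OF a a]] z by simp
  then show ?thesis by simp
qed

lemma int_zero_AE:
  fixes a h :: "_ \<Rightarrow> real"
  assumes "AE x in M. a x = 0"
  shows "(\<integral>x. a x * h x \<partial>M) = 0"
  by (rule integral_eq_zero_AE) (use assms in auto)

lemma zero_lemma:
  assumes W: "\<And>k. k\<in>S \<Longrightarrow> L2 M (W k)" and f: "L2 M f" and g: "L2 M g"
    and a: "a \<in> lc W S" and of: "orth M W S f" and og: "orth M W S g"
    and fga: "\<And>x. f x = g x + a x" and h: "L2 M h"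
  shows "(\<integral>x. f x * h x \<partial>M) = (\<integral>x. g x * h x \<partial>M)"
proof -
  have aL: "L2 M a" using lc_L2[OF W a] .
  have "(\<integral>x. a x * a x \<partial>M) = (\<integral>x. f x * a x - g x * a x \<partial>M)"
    by (simp add: fga algebra_simps)
  also have "\<dots> = (\<integral>x. f x * a x \<partial>M) - (\<integral>x. g x * a x \<partial>M)"
    by (rule Bochner_Integration.integral_diff[OF L2_mult_int[OF f aL] L2_mult_int[OF g aL]])
  also have "\<dots> = 0" using of og a unfolding orth_def by simp
  finally have "AE x in M. a x = 0" using AE_zero_of_sq[OF aL] by simp
  then have z: "(\<integral>x. a x * h x \<partial>M) = 0" by (rule int_zero_AE)
  have "(\<integral>x. f x * h x \<partial>M) = (\<integral>x. g x * h x + a x * h x \<partial>M)"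
    by (simp add: fga algebra_simps)
  also have "\<dots> = (\<integral>x. g x * h x \<partial>M) + (\<integral>x. a x * h x \<partial>M)"
    by (rule Bochner_Integration.integral_add[OF L2_mult_int[OF g h] L2_mult_int[OF aL h]])
  finally show ?thesis using z by simp
qed

end


context prob_space begin

lemma exists_proj:
  assumes "finite S" and "\<forall>k\<in>S. L2 M (W k)" and "L2 M Z"
  shows "\<exists>v\<in>lc W S. orth M W S (\<lambda>x. Z x - v x)"
  using assms
proof (induction S arbitrary: Z rule: finite_induct)
  case empty
  let ?m = "(\<integral>x. Z x \<partial>M)"
  have "orth M W {} (\<lambda>x. Z x - ?m)"
  proof (rule orth_normal)
    show "L2 M (\<lambda>x. Z x - ?m)" using L2_diff[OF empty.prems(2) L2_const] .
    show "(\<integral>x. Z x - ?m \<partial>M) = 0"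
      using Bochner_Integration.integral_diff[OF L2_integrable[OF empty.prems(2)] L2_integrable[OF L2_const[of ?m]]]
      by (simp add: int_const prob_space)
  qed auto
  then show ?case using lc_const[of ?m W "{}"] by (intro bexI[of _ "\<lambda>_. ?m"])
next
  case (insert k S)
  have WS: "\<And>i. i \<in> S \<Longrightarrow> L2 M (W i)" using insert.prems by auto
  have WI: "\<And>i. i \<in> insert k S \<Longrightarrow> L2 M (W i)" using insert.prems by auto
  have Wk: "L2 M (W k)" using insert.prems by auto
  obtain vZ where vZ: "vZ \<in> lc W S" and oZ: "orth M W S (\<lambda>x. Z x - vZ x)"
    using insert.IH[of Z] insert.prems by auto
  obtain vW where vW: "vW \<in> lc W S" and oW: "orth M W S (\<lambda>x. W k x - vW x)"
    using insert.IH[of "W k"] insert.prems by auto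
  define rZ where "rZ = (\<lambda>x. Z x - vZ x)"
  define rW where "rW = (\<lambda>x. W k x - vW x)"
  have LvZ: "L2 M vZ" using lc_L2[OF WS vZ] .
  have LvW: "L2 M vW" using lc_L2[OF WS vW] .
  have LrZ: "L2 M rZ" unfolding rZ_def using L2_diff[OF insert.prems(2) LvZ] .
  have LrW: "L2 M rW" unfolding rW_def using L2_diff[OF Wk LvW] .
  define q where "q = (\<integral>x. rW x * rW x \<partial>M)"
  define t where "t = (if q = 0 then 0 else (\<integral>x. rZ x * rW x \<partial>M) / q)"
  define r where "r = (\<lambda>x. rZ x - t * rW x)"
  define v where "v = (\<lambda>x. vZ x + t * (W k x - vW x))"
  have rv: "(\<lambda>x. Z x - v x) = r" unfolding r_def v_def rZ_def rW_def by (auto simp: algebra_simps)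
  have sub: "lc W S \<subseteq> lc W (insert k S)" using lc_mono[of "insert k S" S W] insert.hyps by auto
  have vin: "v \<in> lc W (insert k S)" unfolding v_def
    using lc_add[OF _ lc_scale[OF lc_diff[OF lc_W[of "insert k S" k W]]]] vZ vW sub insert.hyps by auto
  have LrS: "L2 M (\<lambda>x. t * rW x)" using L2_scale[OF LrW] .
  have Lr: "L2 M r" unfolding r_def using L2_diff[OF LrZ LrS] .
  have orS: "orth M W S r" unfolding r_def
    using orth_diff[OF WS LrZ LrS] oZ orth_scale[OF oW, of t] unfolding rZ_def rW_def by auto
  have rrW: "(\<integral>x. r x * rW x \<partial>M) = 0"
  proof -
    have "(\<integral>x. r x * rW x \<partial>M) = (\<integral>x. rZ x * rW x - t * (rW x * rW x) \<partial>M)"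
      unfolding r_def by (simp add: algebra_simps)
    also have "\<dots> = (\<integral>x. rZ x * rW x \<partial>M) - t * q"
      using Bochner_Integration.integral_diff[OF L2_mult_int[OF LrZ LrW] integrable_mult_right[OF L2_mult_int[OF LrW LrW]], of t]
      unfolding q_def by simp
    also have "\<dots> = 0"
    proof (cases "q = 0")
      case True
      then have "AE x in M. rW x = 0" using AE_zero_of_sq[OF LrW] unfolding q_def by simp
      then have "(\<integral>x. rW x * rZ x \<partial>M) = 0" by (rule int_zero_AE)
      then show ?thesis using True unfolding t_def by (simp add: mult.commute)
    next
      case False
      then show ?thesis unfolding t_def by simp
    qed
    finally show ?thesis .
  qed
  have rWk: "(\<integral>x. r x * W k x \<partial>M) = 0"
  proof -
    have "(\<integral>x. r x * W k x \<partial>M) = (\<integral>x. r x * rW x + r x * vW x \<partial>M)"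
      unfolding rW_def by (simp add: algebra_simps)
    also have "\<dots> = (\<integral>x. r x * rW x \<partial>M) + (\<integral>x. r x * vW x \<partial>M)"
      by (rule Bochner_Integration.integral_add[OF L2_mult_int[OF Lr LrW] L2_mult_int[OF Lr LvW]])
    finally show ?thesis using rrW orS vW unfolding orth_def by simp
  qed
  have "orth M W (insert k S) r"
  proof (rule orth_normal[OF WI Lr])
    show "(\<integral>x. r x \<partial>M) = 0" using orth_imp(1)[OF insert.hyps(1) orS] .
    show "\<forall>i\<in>insert k S. (\<integral>x. r x * W i x \<partial>M) = 0"
      using orth_imp(2)[OF insert.hyps(1) orS] rWk by auto
  qed
  then show ?case using vin rv by (intro bexI[of _ v]) auto
qed

end


context prob_space begin

lemma resid_ok:
  assumes fin: "finite S" and W: "\<forall>k\<in>S. L2 M (W k)" and Z: "L2 M Z"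
  shows "\<exists>v\<in>lc W S. resid M Z W S = (\<lambda>x. Z x - v x)" "orth M W S (resid M Z W S)"
proof -
  have W': "\<And>k. k \<in> S \<Longrightarrow> L2 M (W k)" using W by auto
  obtain v0 where v0: "v0 \<in> lc W S" and o0: "orth M W S (\<lambda>x. Z x - v0 x)"
    using exists_proj[OF fin W Z] by blast
  obtain c0 c where v0e: "v0 = (\<lambda>\<omega>. c0 + (\<Sum>k\<in>S. c k * W k \<omega>))" using v0 unfolding lc_def by blast
  define P where "P = (\<lambda>(c0::real, c::nat\<Rightarrow>real).
      (\<integral>\<omega>. Z \<omega> - (c0 + (\<Sum>k\<in>S. c k * W k \<omega>)) \<partial>M) = 0 \<and>
      (\<forall>k\<in>S. (\<integral>\<omega>. (Z \<omega> - (c0 + (\<Sum>k'\<in>S. c k' * W k' \<omega>))) * W k \<omega> \<partial>M) = 0))"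
  have "P (c0, c)" using orth_imp[OF fin o0] unfolding P_def v0e by simp
  then have "P (Eps P)" by (rule someI)
  moreover have "lin_coeffs M Z W S = Eps P" unfolding lin_coeffs_def P_def by simp
  ultimately have PL: "P (lin_coeffs M Z W S)" by simp
  obtain d0 d where ld: "lin_coeffs M Z W S = (d0, d)" by (cases "lin_coeffs M Z W S")
  define v where "v = (\<lambda>\<omega>. d0 + (\<Sum>k\<in>S. d k * W k \<omega>))"
  have vin: "v \<in> lc W S" unfolding v_def lc_def by blast
  have re: "resid M Z W S = (\<lambda>x. Z x - v x)" unfolding resid_def ld v_def by simp
  then show "\<exists>v\<in>lc W S. resid M Z W S = (\<lambda>x. Z x - v x)" using vin by blast
  have Lr: "L2 M (\<lambda>x. Z x - v x)" using L2_diff[OF Z lc_L2[OF W' vin]] .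
  have "orth M W S (\<lambda>x. Z x - v x)"
    using orth_normal[OF W' Lr] PL unfolding ld P_def v_def by simp
  then show "orth M W S (resid M Z W S)" using re by simp
qed

lemma cov_eq:
  assumes f: "L2 M f" and g: "L2 M g"
  shows "cov M f g = (\<integral>x. f x * g x \<partial>M) - (\<integral>x. f x \<partial>M) * (\<integral>x. g x \<partial>M)"
proof -
  let ?a = "(\<integral>x. f x \<partial>M)" and ?b = "(\<integral>x. g x \<partial>M)"
  have fi: "integrable M f" and gi: "integrable M g" using f g by (auto intro: L2_integrable)
  have fg: "integrable M (\<lambda>x. f x * g x)" using L2_mult_int[OF f g] .
  have "cov M f g = (\<integral>x. (f x * g x - ?b * f x) - (?a * g x - ?a * ?b) \<partial>M)"
    unfolding cov_def by (simp add: algebra_simps)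
  also have "\<dots> = (\<integral>x. f x * g x - ?b * f x \<partial>M) - (\<integral>x. ?a * g x - ?a * ?b \<partial>M)"
    by (rule Bochner_Integration.integral_diff) (use fi gi fg in auto)
  also have "\<dots> = (\<integral>x. f x * g x \<partial>M) - ?b * ?a - (?a * ?b - ?a * ?b)"
    using fi gi fg by (simp add: Bochner_Integration.integral_diff prob_space)
  finally show ?thesis by simp
qed

lemma cov_sym: "cov M f g = cov M g f"
  unfolding cov_def by (simp add: mult.commute)

lemma cov_sum_left:
  assumes X: "\<And>j. j \<in> I \<Longrightarrow> L2 M (X j)" and g: "L2 M g"
  shows "cov M (\<lambda>x. \<Sum>j\<in>I. c j * X j x) g = (\<Sum>j\<in>I. c j * cov M (X j) g)"
proof -
  have LS: "L2 M (\<lambda>x. \<Sum>j\<in>I. c j * X j x)" by (rule L2_sum, rule L2_scale, rule X)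
  have i1: "\<And>j. j \<in> I \<Longrightarrow> integrable M (\<lambda>x. c j * (X j x * g x))"
    using L2_mult_int[OF L2_scale[OF X] g] by (simp add: mult.assoc)
  have i2: "\<And>j. j \<in> I \<Longrightarrow> integrable M (\<lambda>x. c j * X j x)"
    using L2_integrable[OF L2_scale[OF X]] by simp
  have "cov M (\<lambda>x. \<Sum>j\<in>I. c j * X j x) g =
     (\<integral>x. (\<Sum>j\<in>I. c j * X j x * g x) \<partial>M) - (\<integral>x. (\<Sum>j\<in>I. c j * X j x) \<partial>M) * (\<integral>x. g x \<partial>M)"
    using cov_eq[OF LS g] by (simp add: sum_distrib_right)
  also have "\<dots> = (\<Sum>j\<in>I. c j * ((\<integral>x. X j x * g x \<partial>M) - (\<integral>x. X j x \<partial>M) * (\<integral>x. g x \<partial>M)))"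
    by (simp add: Bochner_Integration.integral_sum[OF i1] Bochner_Integration.integral_sum[OF i2]
        sum_distrib_right right_diff_distrib sum_subtractf mult.assoc)
  also have "\<dots> = (\<Sum>j\<in>I. c j * cov M (X j) g)"
    using cov_eq[OF X g] by simp
  finally show ?thesis .
qed

lemma cov_quad:
  assumes X: "\<And>j. j \<in> I \<Longrightarrow> L2 M (X j)"
  shows "(\<Sum>j\<in>I. \<Sum>k\<in>I. c j * c k * cov M (X j) (X k)) =
         cov M (\<lambda>x. \<Sum>j\<in>I. c j * X j x) (\<lambda>x. \<Sum>j\<in>I. c j * X j x)"
proof -
  have LS: "L2 M (\<lambda>x. \<Sum>j\<in>I. c j * X j x)" by (rule L2_sum, rule L2_scale, rule X)
  have "cov M (\<lambda>x. \<Sum>j\<in>I. c j * X j x) (\<lambda>x. \<Sum>j\<in>I. c j * X j x)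
      = (\<Sum>j\<in>I. c j * cov M (X j) (\<lambda>x. \<Sum>k\<in>I. c k * X k x))"
    by (rule cov_sum_left[OF X LS])
  also have "\<dots> = (\<Sum>j\<in>I. c j * (\<Sum>k\<in>I. c k * cov M (X k) (X j)))"
  proof (rule sum.cong[OF refl])
    fix j assume j: "j \<in> I"
    have "cov M (X j) (\<lambda>x. \<Sum>k\<in>I. c k * X k x) = cov M (\<lambda>x. \<Sum>k\<in>I. c k * X k x) (X j)"
      by (rule cov_sym)
    also have "\<dots> = (\<Sum>k\<in>I. c k * cov M (X k) (X j))" by (rule cov_sum_left[OF X X[OF j]])
    finally show "c j * cov M (X j) (\<lambda>x. \<Sum>k\<in>I. c k * X k x) = c j * (\<Sum>k\<in>I. c k * cov M (X k) (X j))"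
      by simp
  qed
  also have "\<dots> = (\<Sum>j\<in>I. \<Sum>k\<in>I. c j * c k * cov M (X j) (X k))"
    by (simp add: sum_distrib_left mult.assoc cov_sym[of "X _" "X _"])
  finally show ?thesis by simp
qed

end


theorem corollary1:
  fixes M :: "'a measure" and p :: nat and X :: "nat \<Rightarrow> 'a \<Rightarrow> real"
    and eps Y :: "'a \<Rightarrow> real" and \<delta> :: real and \<beta> :: "nat \<Rightarrow> real"
  assumes "prob_space M"
    and X_meas: "\<forall>j\<in>{1..p}. X j \<in> borel_measurable M"
    and X_L2: "\<forall>j\<in>{1..p}. integrable M (\<lambda>\<omega>. (X j \<omega>)\<^sup>2)"
    and Sigma_pd: "\<forall>c :: nat \<Rightarrow> real. (\<exists>j\<in>{1..p}. c j \<noteq> 0) \<longrightarrow>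
                     (\<Sum>j\<in>{1..p}. \<Sum>k\<in>{1..p}. c j * c k * cov M (X j) (X k)) > 0"
    and eps_meas: "eps \<in> borel_measurable M"
    and eps_L2: "integrable M (\<lambda>\<omega>. (eps \<omega>)\<^sup>2)"
    and eps_mean: "(\<integral>\<omega>. eps \<omega> \<partial>M) = 0"
    and eps_var: "cov M eps eps > 0"
    and eps_uncorr: "\<forall>j\<in>{1..p}. cov M eps (X j) = 0"
    and Y_def: "\<forall>\<omega>. Y \<omega> = \<delta> + (\<Sum>j\<in>{1..p}. \<beta> j * X j \<omega>) + eps \<omega>"
    and pf: "partially_faithful M p X Y"
  shows "\<forall>j\<in>{1..p}. (\<forall>S. S \<subseteq> {1..p} - {j} \<longrightarrow> pcorr M Y (X j) X S \<noteq> 0) \<longleftrightarrow> \<beta> j \<noteq> 0"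
proof
  interpret P: prob_space M by fact
  fix j assume j: "j \<in> {1..p}"
  have XL: "\<And>k. k \<in> {1..p} \<Longrightarrow> L2 M (X k)" using X_meas X_L2 unfolding L2_def by auto
  have epsL: "L2 M eps" using eps_meas eps_L2 unfolding L2_def by auto
  define S0 where "S0 = {1..p} - {j}"
  have finS0: "finite S0" and S0sub: "S0 \<subseteq> {1..p}" and jS0: "j \<notin> S0" unfolding S0_def by auto
  have XS0: "\<And>k. k \<in> S0 \<Longrightarrow> L2 M (X k)" using XL S0sub by auto
  have XS0': "\<forall>k\<in>S0. L2 M (X k)" using XS0 by auto
  have XjL: "L2 M (X j)" using XL j .
  have Yeq: "Y = (\<lambda>\<omega>. \<delta> + (\<Sum>k\<in>{1..p}. \<beta> k * X k \<omega>) + eps \<omega>)" using Y_def by auto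
  have YL: "L2 M Y" unfolding Yeq
    by (rule P.L2_add[OF P.L2_add[OF P.L2_const P.L2_sum] epsL], rule P.L2_scale, rule XL)
  have eps_orth_all: "orth M X {1..p} eps"
  proof (rule P.orth_normal[OF XL epsL eps_mean])
    show "\<forall>k\<in>{1..p}. (\<integral>x. eps x * X k x \<partial>M) = 0"
      using eps_uncorr P.cov_eq[OF epsL XL] eps_mean by auto
  qed
  have eps_orth: "orth M X S0 eps" using P.orth_mono[OF _ S0sub eps_orth_all] by simp
  obtain vX where vX: "vX \<in> lc X S0" and rXe: "resid M (X j) X S0 = (\<lambda>x. X j x - vX x)"
    using P.resid_ok(1)[OF finS0 XS0' XjL] by blast
  have oX: "orth M X S0 (resid M (X j) X S0)" using P.resid_ok(2)[OF finS0 XS0' XjL] .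
  obtain vY where vY: "vY \<in> lc X S0" and rYe: "resid M Y X S0 = (\<lambda>x. Y x - vY x)"
    using P.resid_ok(1)[OF finS0 XS0' YL] by blast
  have oY: "orth M X S0 (resid M Y X S0)" using P.resid_ok(2)[OF finS0 XS0' YL] .
  define rX where "rX = resid M (X j) X S0"
  define rY where "rY = resid M Y X S0"
  have LvX: "L2 M vX" using P.lc_L2[OF XS0 vX] .
  have LvY: "L2 M vY" using P.lc_L2[OF XS0 vY] .
  have LrX: "L2 M rX" unfolding rX_def rXe using P.L2_diff[OF XjL LvX] .
  have LrY: "L2 M rY" unfolding rY_def rYe using P.L2_diff[OF YL LvY] .
  have rX_all: "rX \<in> lc X {1..p}" unfolding rX_def rXe
    using lc_diff[OF lc_W[of "{1..p}" j X] lc_mono[OF _ S0sub, of X, THEN subsetD, OF _ vX]] j by auto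
  have eps_rX: "(\<integral>x. eps x * rX x \<partial>M) = 0" using eps_orth_all rX_all unfolding orth_def by auto
  define g where "g = (\<lambda>x. \<beta> j * rX x + eps x)"
  have Lg: "L2 M g" unfolding g_def using P.L2_add[OF P.L2_scale[OF LrX] epsL] .
  have og: "orth M X S0 g" unfolding g_def
    using P.orth_add[OF XS0 P.L2_scale[OF LrX] epsL P.orth_scale eps_orth] oX unfolding rX_def by auto
  define u where "u = (\<lambda>\<omega>. \<delta> + (\<Sum>k\<in>S0. \<beta> k * X k \<omega>))"
  have uin: "u \<in> lc X S0" unfolding u_def lc_def by blast
  define a where "a = (\<lambda>x. \<beta> j * vX x + u x - vY x)"
  have ain: "a \<in> lc X S0" unfolding a_def by (intro lc_diff lc_add lc_scale vX uin vY)
  have split: "\<And>\<omega>. (\<Sum>k\<in>{1..p}. \<beta> k * X k \<omega>) = \<beta> j * X j \<omega> + (\<Sum>k\<in>S0. \<beta> k * X k \<omega>)"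
    unfolding S0_def using j by (simp add: sum.remove)
  have fga: "\<And>x. rY x = g x + a x"
    unfolding rY_def rYe g_def a_def rX_def rXe u_def using Y_def split by (simp add: algebra_simps)
  have key: "\<And>h. L2 M h \<Longrightarrow> (\<integral>x. rY x * h x \<partial>M) = \<beta> j * (\<integral>x. rX x * h x \<partial>M) + (\<integral>x. eps x * h x \<partial>M)"
  proof -
    fix h assume h: "L2 M h"
    have "(\<integral>x. rY x * h x \<partial>M) = (\<integral>x. g x * h x \<partial>M)"
      using P.zero_lemma[OF XS0 LrY Lg ain _ og fga h] oY unfolding rY_def by simp
    also have "\<dots> = (\<integral>x. \<beta> j * (rX x * h x) + eps x * h x \<partial>M)"
      unfolding g_def by (simp add: algebra_simps)
    also have "\<dots> = \<beta> j * (\<integral>x. rX x * h x \<partial>M) + (\<integral>x. eps x * h x \<partial>M)"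
      using Bochner_Integration.integral_add[OF integrable_mult_right[OF P.L2_mult_int[OF LrX h]] P.L2_mult_int[OF epsL h]]
      by simp
    finally show "(\<integral>x. rY x * h x \<partial>M) = \<beta> j * (\<integral>x. rX x * h x \<partial>M) + (\<integral>x. eps x * h x \<partial>M)" .
  qed
  define q where "q = (\<integral>x. rX x * rX x \<partial>M)"
  define s where "s = (\<integral>x. eps x * eps x \<partial>M)"
  have mX: "(\<integral>x. rX x \<partial>M) = 0" using P.orth_imp(1)[OF finS0 oX] unfolding rX_def .
  have mY: "(\<integral>x. rY x \<partial>M) = 0" using P.orth_imp(1)[OF finS0 oY] unfolding rY_def .
  have I1: "(\<integral>x. rY x * rX x \<partial>M) = \<beta> j * q" using key[OF LrX] eps_rX unfolding q_def by simp
  have I3: "(\<integral>x. rY x * eps x \<partial>M) = s"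
    using key[OF epsL] eps_rX unfolding s_def by (simp add: mult.commute)
  have I2: "(\<integral>x. rY x * rY x \<partial>M) = (\<beta> j)^2 * q + s"
  proof -
    have "(\<integral>x. rX x * rY x \<partial>M) = (\<integral>x. rY x * rX x \<partial>M)" by (simp add: mult.commute)
    moreover have "(\<integral>x. eps x * rY x \<partial>M) = (\<integral>x. rY x * eps x \<partial>M)" by (simp add: mult.commute)
    ultimately show ?thesis using key[OF LrY] I1 I3 by (simp add: power2_eq_square)
  qed
  have cYX: "cov M rY rX = \<beta> j * q" using P.cov_eq[OF LrY LrX] mX mY I1 by simp
  have cXX: "cov M rX rX = q" using P.cov_eq[OF LrX LrX] mX unfolding q_def by simp
  have cYY: "cov M rY rY = (\<beta> j)^2 * q + s" using P.cov_eq[OF LrY LrY] mY I2 by simp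
  have s_pos: "s > 0" using eps_var P.cov_eq[OF epsL epsL] eps_mean unfolding s_def by simp
  have pc: "pcorr M Y (X j) X S0 = \<beta> j * q / sqrt (((\<beta> j)^2 * q + s) * q)"
    unfolding pcorr_def using cYX cXX cYY unfolding rX_def rY_def by simp
  have q_pos: "q > 0"
  proof -
    obtain d0 d where vXe: "vX = (\<lambda>\<omega>. d0 + (\<Sum>k\<in>S0. d k * X k \<omega>))" using vX unfolding lc_def by blast
    define c where "c = (\<lambda>k. if k = j then 1 else - d k)"
    have cs: "\<And>\<omega>. (\<Sum>k\<in>{1..p}. c k * X k \<omega>) = rX \<omega> + d0"
    proof -
      fix \<omega>
      have "(\<Sum>k\<in>{1..p}. c k * X k \<omega>) = c j * X j \<omega> + (\<Sum>k\<in>S0. c k * X k \<omega>)"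
        unfolding S0_def using j by (simp add: sum.remove)
      also have "(\<Sum>k\<in>S0. c k * X k \<omega>) = (\<Sum>k\<in>S0. - (d k * X k \<omega>))"
        by (rule sum.cong) (use jS0 in \<open>auto simp: c_def\<close>)
      finally show "(\<Sum>k\<in>{1..p}. c k * X k \<omega>) = rX \<omega> + d0"
        unfolding rX_def rXe vXe c_def by (simp add: sum_negf)
    qed
    have "0 < (\<Sum>i\<in>{1..p}. \<Sum>k\<in>{1..p}. c i * c k * cov M (X i) (X k))"
    proof -
      have "c j \<noteq> 0" unfolding c_def by simp
      then have "\<exists>i\<in>{1..p}. c i \<noteq> 0" using j by blast
      then show ?thesis using Sigma_pd by blast
    qed
    also have "\<dots> = cov M (\<lambda>x. \<Sum>i\<in>{1..p}. c i * X i x) (\<lambda>x. \<Sum>i\<in>{1..p}. c i * X i x)"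
      by (rule P.cov_quad[OF XL])
    also have "\<dots> = cov M (\<lambda>x. rX x + d0) (\<lambda>x. rX x + d0)" using cs by simp
    also have "\<dots> = q"
    proof -
      have "(\<integral>x. rX x + d0 \<partial>M) = d0"
        using Bochner_Integration.integral_add[OF P.L2_integrable[OF LrX] P.L2_integrable[OF P.L2_const[of d0]]] mX
        by (simp add: P.prob_space)
      then show ?thesis unfolding cov_def q_def by simp
    qed
    finally show ?thesis .
  qed
  show "(\<forall>S. S \<subseteq> {1..p} - {j} \<longrightarrow> pcorr M Y (X j) X S \<noteq> 0) \<longleftrightarrow> \<beta> j \<noteq> 0"
  proof
    assume "\<forall>S. S \<subseteq> {1..p} - {j} \<longrightarrow> pcorr M Y (X j) X S \<noteq> 0"
    then have "pcorr M Y (X j) X S0 \<noteq> 0" unfolding S0_def by auto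
    then show "\<beta> j \<noteq> 0" using pc by auto
  next
    assume b: "\<beta> j \<noteq> 0"
    have pos: "((\<beta> j)^2 * q + s) * q > 0" using q_pos s_pos by (simp add: add_nonneg_pos)
    have pos2: "(\<beta> j)^2 * q + s > 0" using q_pos s_pos by (simp add: add_nonneg_pos)
    have "sqrt (((\<beta> j)^2 * q + s) * q) > 0" using pos by simp
    moreover have "\<beta> j * q \<noteq> 0" using b q_pos by simp
    ultimately have "pcorr M Y (X j) X S0 \<noteq> 0" unfolding pc using pos2 by simp
    then show "\<forall>S. S \<subseteq> {1..p} - {j} \<longrightarrow> pcorr M Y (X j) X S \<noteq> 0"
      using pf j unfolding partially_faithful_def S0_def by blast
  qed
qed


end
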